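(* Let $(X,Y)\sim\rho^{XY}$ be random vectors in $\mathbb R^d$. Define $\Phi_{\mathrm{ext}}(x)=\Phi(x)$ for $x\ge0$ and $\Phi_{\mathrm{ext}}(x)=+\infty$ for $x<0$, and let $\Phi^*_{\mathrm{ext}}(y)=\sup_{x\in\mathbb R}(xy-\Phi_{\mathrm{ext}}(x))$ be its convex conjugate. Assume there exists $0<\xi<\infty$ such that for all $\theta\in\mathbb R^d$, $$\inf_{a\in\mathbb R}\Big\{\mathbb E_{\rho^Y}\big[\Phi^*_{\mathrm{ext}}(\langle\theta,Y-\mathbb E[Y]\rangle-a)\big]+a\Big\}\le\frac{\|\theta\|^2\xi^2}{2}.$$ Then $$\|\mathrm{Cov}(X,Y)\|_{\mathrm{op}}\le\xi\sqrt{2\,\|\mathrm{Cov}(X,X)\|_{\mathrm{op}}\,\mathsf{MI}_\Phi(\rho^{XY})},$$ where $\mathrm{Cov}(X,Y)=\mathbb E[(X-\mathbb EX)(Y-\mathbb EY)^\top]$.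
   Context: Throughout, $\Phi:[0,\infty)\to\mathbb R$ is a twice-differentiable strictly convex function with $\Phi(1)=0$. For probability distributions $\mu,\nu$ with $\mu\ll\nu$, the $\Phi$-divergence is $\mathsf D_\Phi(\mu\|\nu)=\int\Phi\big(\frac{d\mu}{d\nu}\big)\,d\nu$, and $\mathsf D_\Phi(\mu\|\nu)=+\infty$ if $\mu\not\ll\nu$. For a random pair $(X,Y)$ with joint law $\rho^{XY}$ and marginals $\rho^X,\rho^Y$, the $\Phi$-mutual information is $\mathsf{MI}_\Phi(\rho^{XY})=\mathsf D_\Phi(\rho^{XY}\|\rho^X\otimes\rho^Y)=\mathbb E_{x\sim\rho^X}[\mathsf D_\Phi(\rho^{Y\mid X=x}\|\rho^Y)]$. $\|\cdot\|_{\mathrm{op}}$ is the operator norm. *)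

theory Defs
  imports "HOL-Analysis.Analysis" "HOL-Probability.Probability"
begin

definition strictly_convex_on :: "real set \<Rightarrow> (real \<Rightarrow> real) \<Rightarrow> bool" where
  "strictly_convex_on S f \<longleftrightarrow>
     (\<forall>x\<in>S. \<forall>y\<in>S. x \<noteq> y \<longrightarrow> (\<forall>t. 0 < t \<and> t < 1 \<longrightarrow>
        f (t * x + (1 - t) * y) < t * f x + (1 - t) * f y))"

definition admissible_Phi :: "(real \<Rightarrow> real) \<Rightarrow> bool" where
  "admissible_Phi Phi \<longleftrightarrow>
     (\<exists>Phi' Phi''. (\<forall>x\<ge>0. (Phi has_real_derivative Phi' x) (at x within {0..}) \<and>
                           (Phi' has_real_derivative Phi'' x) (at x within {0..})))
     \<and> strictly_convex_on {0..} Phi \<and> Phi 1 = 0"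

definition ext_integral :: "'a measure \<Rightarrow> ('a \<Rightarrow> ereal) \<Rightarrow> ereal" where
  "ext_integral M f =
     enn2ereal (\<integral>\<^sup>+ x. e2ennreal (max (f x) 0) \<partial>M)
     - enn2ereal (\<integral>\<^sup>+ x. e2ennreal (max (- f x) 0) \<partial>M)"

text \<open>Phi-divergence D_Phi(mu || nu); mu \<ll> nu is absolutely_continuous nu mu.\<close>
definition Phi_div :: "(real \<Rightarrow> real) \<Rightarrow> 'a measure \<Rightarrow> 'a measure \<Rightarrow> ereal" where
  "Phi_div Phi mu nu =
     (if sets mu = sets nu \<and> absolutely_continuous nu mu
      then ext_integral nu (\<lambda>x. ereal (Phi (enn2real (RN_deriv nu mu x))))
      else \<infinity>)"

definition Phi_MI :: "(real \<Rightarrow> real) \<Rightarrow> ('a::topological_space \<times> 'b::topological_space) measure \<Rightarrow> ereal" where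
  "Phi_MI Phi rho = Phi_div Phi rho (distr rho borel fst \<Otimes>\<^sub>M distr rho borel snd)"

definition Phi_ext :: "(real \<Rightarrow> real) \<Rightarrow> real \<Rightarrow> ereal" where
  "Phi_ext Phi x = (if x \<ge> 0 then ereal (Phi x) else \<infinity>)"

definition Phi_ext_conj :: "(real \<Rightarrow> real) \<Rightarrow> real \<Rightarrow> ereal" where
  "Phi_ext_conj Phi y = (SUP x\<in>(UNIV::real set). ereal (x * y) - Phi_ext Phi x)"

definition cross_cov :: "('a \<times> 'b) measure \<Rightarrow> ('a \<times> 'b \<Rightarrow> real^'n) \<Rightarrow> ('a \<times> 'b \<Rightarrow> real^'m)
     \<Rightarrow> real^'m^'n" where
  "cross_cov rho U V = (\<chi> i j. \<integral>z. ((U z - (\<integral>w. U w \<partial>rho)) $ i) *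
                                     ((V z - (\<integral>w. V w \<partial>rho)) $ j) \<partial>rho)"

end

theory Submission
  imports Defs
begin

lemma Phi_facts:
  assumes "admissible_Phi Phi"
  shows "continuous_on {0..} Phi" "convex_on {0..} Phi" "Phi 1 = 0"
    "\<exists>c. \<forall>x\<ge>0. Phi x \<ge> c * (x - 1)"
proof -
  obtain Phi' Phi'' where d: "\<And>x. x \<ge> 0 \<Longrightarrow> (Phi has_real_derivative Phi' x) (at x within {0..})"
    and sc: "strictly_convex_on {0..} Phi" and p1: "Phi 1 = 0"
    using assms unfolding admissible_Phi_def by blast
  show c: "continuous_on {0..} Phi"
    using d by (auto simp: continuous_on_eq_continuous_within intro: DERIV_continuous)
  show cv: "convex_on {0..} Phi"
  proof (rule convex_onI)
    fix t x y :: real assume t: "0 < t" "t < 1" and xy: "x \<in> {0..}" "y \<in> {0..}"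
    show "Phi ((1 - t) *\<^sub>R x + t *\<^sub>R y) \<le> (1 - t) * Phi x + t * Phi y"
    proof (cases "x = y")
      case True then show ?thesis by (simp add: algebra_simps)
    next
      case False
      have "1 - t > 0" "1 - t < 1" using t by auto
      with sc xy False have "Phi ((1 - t) * x + (1 - (1 - t)) * y) < (1 - t) * Phi x + (1 - (1 - t)) * Phi y"
        unfolding strictly_convex_on_def by blast
      then show ?thesis by simp
    qed
  qed simp
  show "Phi 1 = 0" by fact
  have "Phi x - Phi 1 \<ge> Phi' 1 * (x - 1)" if "x \<ge> 0" for x
    using convex_on_imp_above_tangent[OF cv _ _ _ d[of 1]] that by auto
  then show "\<exists>c. \<forall>x\<ge>0. Phi x \<ge> c * (x - 1)" using p1 by auto
qed

lemma conj_ge: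
  assumes "x \<ge> 0"
  shows "ereal (x * y - Phi x) \<le> Phi_ext_conj Phi y"
  unfolding Phi_ext_conj_def
  by (rule SUP_upper2[of x]) (use assms in \<open>auto simp: Phi_ext_def\<close>)

lemma conj_SUP_rat:
  assumes c: "continuous_on {0..} Phi"
  shows "Phi_ext_conj Phi y = (SUP q\<in>\<rat> \<inter> {0..}. ereal (q * y - Phi q))"
proof (rule antisym)
  show "(SUP q\<in>\<rat> \<inter> {0..}. ereal (q * y - Phi q)) \<le> Phi_ext_conj Phi y"
    by (rule SUP_least) (auto intro: conj_ge)
  show "Phi_ext_conj Phi y \<le> (SUP q\<in>\<rat> \<inter> {0..}. ereal (q * y - Phi q))"
    unfolding Phi_ext_conj_def
  proof (rule SUP_least)
    fix x :: real assume "x \<in> UNIV"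
    show "ereal (x * y) - Phi_ext Phi x \<le> (SUP q\<in>\<rat> \<inter> {0..}. ereal (q * y - Phi q))"
    proof (cases "x \<ge> 0")
      case False then show ?thesis by (simp add: Phi_ext_def)
    next
      case True
      let ?S = "(SUP q\<in>\<rat> \<inter> {0..}. ereal (q * y - Phi q))"
      have "ereal (x * y - Phi x) \<le> ?S"
      proof (rule ccontr)
        assume "\<not> ?thesis"
        then have lt: "?S < ereal (x * y - Phi x)" by simp
        have cx: "continuous (at x within {0..}) (\<lambda>z. z * y - Phi z)"
          using c True by (auto simp: continuous_on_eq_continuous_within intro!: continuous_intros)
        obtain s where s: "?S < ereal s" "s < x * y - Phi x"
          using lt by (meson ereal_dense2 less_ereal.simps(1) ereal_less_eq(3) order.strict_trans1
              ereal_dense2)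
        have "\<forall>\<^sub>F z in at x within {0..}. s < z * y - Phi z"
          using cx s(2) unfolding continuous_within by (rule order_tendstoD)
        then obtain e where e: "e > 0" "\<And>z. z \<in> {0..} \<Longrightarrow> z \<noteq> x \<Longrightarrow> dist z x < e \<Longrightarrow> s < z * y - Phi z"
          unfolding eventually_at by blast
        obtain q where q: "q \<in> \<rat>" "x < q" "q < x + e" using Rats_dense_in_real[of x "x + e"] e by auto
        have "s < q * y - Phi q" using e(2)[of q] q True by (auto simp: dist_real_def)
        then have "ereal s < ereal (q * y - Phi q)" by simp
        moreover have "ereal (q * y - Phi q) \<le> ?S" using q True by (intro SUP_upper) auto
        ultimately have "ereal s < ?S" by (rule less_le_trans)
        then show False using s(1) by simp
      qed
      then show ?thesis using True by (simp add: Phi_ext_def)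
    qed
  qed
qed

lemma conj_meas:
  assumes c: "continuous_on {0..} Phi"
  shows "Phi_ext_conj Phi \<in> borel_measurable borel"
proof -
  have "Phi_ext_conj Phi = (\<lambda>y. SUP q\<in>\<rat> \<inter> {0..}. ereal (q * y - Phi q))"
    using conj_SUP_rat[OF c] by auto
  moreover have "(\<lambda>y. SUP q\<in>\<rat> \<inter> {0..}. ereal (q * y - Phi q)) \<in> borel_measurable borel"
    by (intro borel_measurable_SUP) (auto intro: countable_Int1 countable_rat)
  ultimately show ?thesis by simp
qed

lemma ext_integral_shift:
  assumes M: "prob_space M" and F[measurable]: "F \<in> borel_measurable M"
    and lb: "\<And>x. x \<in> space M \<Longrightarrow> F x \<ge> ereal (- c)"
  shows "enn2ereal (\<integral>\<^sup>+x. e2ennreal (F x + ereal c) \<partial>M) = ext_integral M F + ereal c"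
proof -
  interpret prob_space M by fact
  define P where "P = (\<integral>\<^sup>+ x. e2ennreal (max (F x) 0) \<partial>M)"
  define N where "N = (\<integral>\<^sup>+ x. e2ennreal (max (- F x) 0) \<partial>M)"
  define I where "I = (\<integral>\<^sup>+x. e2ennreal (F x + ereal c) \<partial>M)"
  have ext: "ext_integral M F = enn2ereal P - enn2ereal N"
    unfolding ext_integral_def P_def N_def ..
  show ?thesis
  proof (cases "c \<ge> 0")
    case True
    have pw: "e2ennreal (F x + ereal c) + e2ennreal (max (- F x) 0) = e2ennreal (max (F x) 0) + ennreal c"
      if "x \<in> space M" for x
    proof (cases "F x")
      case (real r)
      with lb[OF that] have r: "r \<ge> - c" by simp
      have "e2ennreal (F x + ereal c) + e2ennreal (max (- F x) 0) = ennreal (r + c) + ennreal (max (- r) 0)"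
        using real by (simp add: max_def)
      also have "\<dots> = ennreal (r + c + max (- r) 0)" using r by (subst ennreal_plus) auto
      also have "r + c + max (- r) 0 = max r 0 + c" by (simp add: max_def)
      also have "ennreal (max r 0 + c) = ennreal (max r 0) + ennreal c" using True by (subst ennreal_plus) auto
      also have "ennreal (max r 0) = e2ennreal (max (F x) 0)" using real by (simp add: max_def)
      finally show ?thesis .
    next
      case PInf then show ?thesis by simp
    next
      case MInf then show ?thesis using lb[OF that] by simp
    qed
    have "I + N = P + ennreal c"
    proof -
      have "I + N = (\<integral>\<^sup>+x. e2ennreal (F x + ereal c) + e2ennreal (max (- F x) 0) \<partial>M)"
        unfolding I_def N_def by (rule nn_integral_add[symmetric]) auto
      also have "\<dots> = (\<integral>\<^sup>+x. e2ennreal (max (F x) 0) + ennreal c \<partial>M)"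
        by (rule nn_integral_cong) (simp add: pw)
      also have "\<dots> = P + ennreal c"
        unfolding P_def by (subst nn_integral_add) (auto simp: emeasure_space_1)
      finally show ?thesis .
    qed
    moreover have "N \<le> ennreal c"
    proof -
      have "N \<le> (\<integral>\<^sup>+x. ennreal c \<partial>M)"
        unfolding N_def
      proof (rule nn_integral_mono)
        fix x assume "x \<in> space M"
        then have "max (- F x) 0 \<le> ereal c" using lb True
          by (metis ereal_minus_le_minus ereal_uminus_uminus max.bounded_iff uminus_ereal.simps(1) zero_ereal_def ereal_less_eq(3))
        then show "e2ennreal (max (- F x) 0) \<le> ennreal c"
          by (metis e2ennreal_ereal e2ennreal_mono)
      qed
      then show ?thesis by (simp add: emeasure_space_1)
    qed
    ultimately have "enn2ereal I + enn2ereal N = enn2ereal P + ereal c" "enn2ereal N \<le> ereal c"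
      using True by (metis enn2ereal_ennreal plus_ennreal.rep_eq, metis enn2ereal_ennreal less_eq_ennreal.rep_eq)
    moreover have "enn2ereal N \<ge> 0" by simp
    ultimately show ?thesis unfolding ext I_def[symmetric]
      by (cases "enn2ereal N"; cases "enn2ereal I"; cases "enn2ereal P") auto
  next
    case False
    have pw: "e2ennreal (F x + ereal c) + ennreal (- c) = e2ennreal (max (F x) 0)"
      and pw0: "e2ennreal (max (- F x) 0) = 0"
      if "x \<in> space M" for x
    proof -
      show "e2ennreal (max (- F x) 0) = 0"
        using lb[OF that] False by (cases "F x") (auto simp: max_def)
      show "e2ennreal (F x + ereal c) + ennreal (- c) = e2ennreal (max (F x) 0)"
      proof (cases "F x")
        case (real r)
        with lb[OF that] have r: "r \<ge> - c" by simp
        then show ?thesis using real False by (simp add: ennreal_plus[symmetric] max_def del: ennreal_plus)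
      qed (use lb[OF that] in auto)
    qed
    have N0: "N = 0" unfolding N_def by (simp add: pw0 nn_integral_cong[OF pw0])
    have "I + ennreal (- c) = P"
    proof -
      have "I + ennreal (- c) = (\<integral>\<^sup>+x. e2ennreal (F x + ereal c) + ennreal (- c) \<partial>M)"
        unfolding I_def by (subst nn_integral_add) (auto simp: emeasure_space_1)
      also have "\<dots> = P" unfolding P_def by (rule nn_integral_cong) (simp add: pw)
      finally show ?thesis .
    qed
    then have "enn2ereal I + ereal (- c) = enn2ereal P"
      using False by (metis enn2ereal_ennreal plus_ennreal.rep_eq less_eq_real_def not_le neg_0_le_iff_le)
    then show ?thesis unfolding ext I_def[symmetric] N0
      by (cases "enn2ereal I"; cases "enn2ereal P") (auto simp: zero_ennreal.rep_eq)
  qed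
qed

lemma Phi_meas_nonneg:
  fixes Phi :: "real \<Rightarrow> real" and f :: "'a \<Rightarrow> real"
  assumes c: "continuous_on {0..} Phi" and f[measurable]: "f \<in> borel_measurable M"
    and nn: "\<And>x. f x \<ge> 0"
  shows "(\<lambda>x. Phi (f x)) \<in> borel_measurable M"
proof -
  have "continuous_on UNIV (\<lambda>x. Phi (max 0 x))"
    by (rule continuous_on_compose2[OF c]) (auto intro!: continuous_on_max continuous_on_const continuous_on_id)
  then have [measurable]: "(\<lambda>x. Phi (max 0 x)) \<in> borel_measurable borel"
    by (rule borel_measurable_continuous_onI)
  have "(\<lambda>x. Phi (max 0 (f x))) \<in> borel_measurable M" by measurable
  moreover have "(\<lambda>x. Phi (max 0 (f x))) = (\<lambda>x. Phi (f x))" using nn by (auto simp: max_def)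
  ultimately show ?thesis by simp
qed

lemma ennreal_norm_split: "ennreal (norm (r::real)) = ennreal (max r 0) + ennreal (max (- r) 0)"
  by (cases "r \<ge> 0") auto

lemma Phi_RN_integrable:
  assumes Phi: "admissible_Phi Phi"
    and N: "prob_space N" and M: "prob_space M" and sets: "sets M = sets N"
    and ac: "absolutely_continuous N M"
    and Dfin: "ext_integral N (\<lambda>z. ereal (Phi (enn2real (RN_deriv N M z)))) \<noteq> \<infinity>"
  shows "integrable N (\<lambda>z. Phi (enn2real (RN_deriv N M z)))"
    "ext_integral N (\<lambda>z. ereal (Phi (enn2real (RN_deriv N M z)))) = ereal (\<integral>z. Phi (enn2real (RN_deriv N M z)) \<partial>N)"
proof -
  interpret N: prob_space N by fact
  interpret M: prob_space M by fact
  define f where "f z = enn2real (RN_deriv N M z)" for z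
  have f[measurable]: "f \<in> borel_measurable N" unfolding f_def by measurable
  have fnn: "\<And>z. f z \<ge> 0" unfolding f_def by simp
  have cont: "continuous_on {0..} Phi" using Phi_facts(1)[OF Phi] .
  have Pf[measurable]: "(\<lambda>z. Phi (f z)) \<in> borel_measurable N"
    by (rule Phi_meas_nonneg[OF cont f fnn])
  obtain c where c: "\<And>x. x \<ge> 0 \<Longrightarrow> Phi x \<ge> c * (x - 1)" using Phi_facts(4)[OF Phi] by blast
  have intf: "integrable N f"
  proof -
    have "integrable M (\<lambda>z. 1::real)" by simp
    then have "integrable N (\<lambda>x. enn2real (RN_deriv N M x) * 1)"
      using N.RN_deriv_integrable[OF M.sigma_finite_measure_axioms ac sets, of "\<lambda>_. 1"] by simp
    then show ?thesis unfolding f_def by simp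
  qed
  define P where "P = (\<integral>\<^sup>+ x. ennreal (max (Phi (f x)) 0) \<partial>N)"
  define Q where "Q = (\<integral>\<^sup>+ x. ennreal (max (- Phi (f x)) 0) \<partial>N)"
  have e1: "e2ennreal (max (ereal r) 0) = ennreal (max r 0)" for r
    by (cases "r \<ge> 0") (auto simp: max_def zero_ereal_def)
  have e2: "e2ennreal (max (- ereal r) 0) = ennreal (max (- r) 0)" for r
    by (cases "r \<ge> 0") (auto simp: max_def zero_ereal_def)
  have D: "ext_integral N (\<lambda>z. ereal (Phi (f z))) = enn2ereal P - enn2ereal Q"
    unfolding ext_integral_def P_def Q_def e1 e2 ..
  have Qfin: "Q < \<infinity>"
  proof -
    have ic: "integrable N (\<lambda>x. \<bar>c\<bar> * (f x + 1))" using intf by auto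
    have "Q \<le> (\<integral>\<^sup>+ x. ennreal (\<bar>c\<bar> * (f x + 1)) \<partial>N)"
      unfolding Q_def
    proof (rule nn_integral_mono)
      fix x assume "x \<in> space N"
      have "- Phi (f x) \<le> \<bar>c\<bar> * (f x + 1)"
      proof -
        have "- Phi (f x) \<le> - (c * (f x - 1))" using c[OF fnn[of x]] by simp
        also have "\<dots> \<le> \<bar>c\<bar> * (f x + 1)"
        proof -
          have h1: "- c * f x \<le> \<bar>c\<bar> * f x" using fnn[of x] by (intro mult_right_mono) auto
          have "- (c * (f x - 1)) = - c * f x + c" by (simp add: algebra_simps)
          then show ?thesis using h1 abs_ge_self[of c] by (simp add: distrib_left)
        qed
        finally show ?thesis .
      qed
      moreover have "0 \<le> \<bar>c\<bar> * (f x + 1)" using fnn[of x] by simp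
      ultimately show "ennreal (max (- Phi (f x)) 0) \<le> ennreal (\<bar>c\<bar> * (f x + 1))"
        by (intro ennreal_leI) simp
    qed
    also have "\<dots> = ennreal (\<integral>x. \<bar>c\<bar> * (f x + 1) \<partial>N)"
      using ic fnn by (intro nn_integral_eq_integral) auto
    finally show ?thesis by (simp add: order_le_less_trans)
  qed
  have eQ: "enn2ereal Q = ereal (enn2real Q)"
    using Qfin by (cases Q rule: ennreal_cases) auto
  have eP: "P < \<infinity> \<Longrightarrow> enn2ereal P = ereal (enn2real P)"
    by (cases P rule: ennreal_cases) auto
  have Pfin: "P < \<infinity>"
  proof (rule ccontr)
    assume "\<not> P < \<infinity>"
    then have "P = \<infinity>" by (simp add: less_top[symmetric])
    then have "ext_integral N (\<lambda>z. ereal (Phi (f z))) = \<infinity>"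
      using D Qfin by (simp add: eQ)
    then show False using Dfin unfolding f_def by simp
  qed
  have intP: "integrable N (\<lambda>z. Phi (f z))"
    unfolding integrable_iff_bounded
  proof (intro conjI)
    show "(\<lambda>z. Phi (f z)) \<in> borel_measurable N" by measurable
    have "(\<integral>\<^sup>+ x. ennreal (norm (Phi (f x))) \<partial>N) = (\<integral>\<^sup>+ x. ennreal (max (Phi (f x)) 0) + ennreal (max (- Phi (f x)) 0) \<partial>N)"
      by (rule nn_integral_cong) (rule ennreal_norm_split)
    also have "\<dots> = P + Q" unfolding P_def Q_def by (rule nn_integral_add) auto
    finally show "(\<integral>\<^sup>+ x. ennreal (norm (Phi (f x))) \<partial>N) < \<infinity>" using Pfin Qfin by simp
  qed
  then show "integrable N (\<lambda>z. Phi (enn2real (RN_deriv N M z)))" unfolding f_def .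
  have "(\<integral>z. Phi (f z) \<partial>N) = (\<integral>z. max (Phi (f z)) 0 - max (- Phi (f z)) 0 \<partial>N)"
    by (rule Bochner_Integration.integral_cong) (auto simp: max_def)
  also have "\<dots> = (\<integral>z. max (Phi (f z)) 0 \<partial>N) - (\<integral>z. max (- Phi (f z)) 0 \<partial>N)"
    using intP by (intro Bochner_Integration.integral_diff) auto
  also have "(\<integral>z. max (Phi (f z)) 0 \<partial>N) = enn2real P"
    unfolding P_def by (rule integral_eq_nn_integral) auto
  also have "(\<integral>z. max (- Phi (f z)) 0 \<partial>N) = enn2real Q"
    unfolding Q_def by (rule integral_eq_nn_integral) auto
  finally have "ereal (\<integral>z. Phi (f z) \<partial>N) = enn2ereal P - enn2ereal Q"
    using eP[OF Pfin] eQ by simp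
  then show "ext_integral N (\<lambda>z. ereal (Phi (enn2real (RN_deriv N M z)))) = ereal (\<integral>z. Phi (enn2real (RN_deriv N M z)) \<partial>N)"
    using D unfolding f_def by simp
qed

lemma variational:
  fixes Phi :: "real \<Rightarrow> real" and g :: "'a \<Rightarrow> real"
  assumes Phi: "admissible_Phi Phi"
    and N: "prob_space N" and M: "prob_space M" and sets: "sets M = sets N"
    and ac: "absolutely_continuous N M"
    and Dfin: "ext_integral N (\<lambda>z. ereal (Phi (enn2real (RN_deriv N M z)))) \<noteq> \<infinity>"
    and g[measurable]: "g \<in> borel_measurable N" and intg: "integrable M g"
    and fin: "(\<integral>\<^sup>+z. e2ennreal (Phi_ext_conj Phi (g z) + ereal (Phi 0)) \<partial>N) < \<infinity>"
  shows "(\<integral>z. g z \<partial>M) + Phi 0 - real_of_ereal (ext_integral N (\<lambda>z. ereal (Phi (enn2real (RN_deriv N M z)))))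
     \<le> enn2real (\<integral>\<^sup>+z. e2ennreal (Phi_ext_conj Phi (g z) + ereal (Phi 0)) \<partial>N)"
proof -
  interpret N: prob_space N by fact
  interpret M: prob_space M by fact
  define f where "f z = enn2real (RN_deriv N M z)" for z
  have f[measurable]: "f \<in> borel_measurable N" unfolding f_def by measurable
  have fnn: "\<And>z. f z \<ge> 0" unfolding f_def by simp
  note RI = Phi_RN_integrable[OF Phi N M sets ac Dfin]
  have intPf: "integrable N (\<lambda>z. Phi (f z))" using RI(1) unfolding f_def .
  have Deq: "real_of_ereal (ext_integral N (\<lambda>z. ereal (Phi (enn2real (RN_deriv N M z))))) = (\<integral>z. Phi (f z) \<partial>N)"
    using RI(2) unfolding f_def by simp
  have intfg: "integrable N (\<lambda>z. f z * g z)"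
    using N.RN_deriv_integrable[OF M.sigma_finite_measure_axioms ac sets g] intg unfolding f_def by simp
  have geq: "(\<integral>z. g z \<partial>M) = (\<integral>z. f z * g z \<partial>N)"
    using N.RN_deriv_integral[OF M.sigma_finite_measure_axioms ac sets g] unfolding f_def by simp
  have cont: "continuous_on {0..} Phi" using Phi_facts(1)[OF Phi] .
  have [measurable]: "Phi_ext_conj Phi \<in> borel_measurable borel" by (rule conj_meas[OF cont])
  define Psi where "Psi z = e2ennreal (Phi_ext_conj Phi (g z) + ereal (Phi 0))" for z
  have Psi[measurable]: "Psi \<in> borel_measurable N" unfolding Psi_def by measurable
  have finP: "integral\<^sup>N N Psi < \<infinity>" unfolding Psi_def using fin .
  have finP': "integral\<^sup>N N Psi < top" using finP by (simp add: infinity_ennreal_def)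
  have AEfin: "AE z in N. Psi z \<noteq> \<infinity>"
    using finP by (intro nn_integral_PInf_AE) auto
  define psi where "psi z = enn2real (Psi z)" for z
  have psi[measurable]: "psi \<in> borel_measurable N" unfolding psi_def by measurable
  have le1: "(\<integral>\<^sup>+z. ennreal (psi z) \<partial>N) \<le> integral\<^sup>N N Psi"
    unfolding psi_def by (rule nn_integral_mono) (simp add: ennreal_enn2real_if)
  have intpsi: "integrable N psi"
    using le1 finP by (intro integrableI_nonneg) (auto simp: psi_def)
  have ipsi: "(\<integral>z. psi z \<partial>N) \<le> enn2real (integral\<^sup>N N Psi)"
  proof -
    have "(\<integral>z. psi z \<partial>N) = enn2real (\<integral>\<^sup>+z. ennreal (psi z) \<partial>N)"
      by (rule integral_eq_nn_integral) (auto simp: psi_def)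
    also have "\<dots> \<le> enn2real (integral\<^sup>N N Psi)"
      by (rule enn2real_mono[OF le1 finP'])
    finally show ?thesis .
  qed
  have pw: "AE z in N. f z * g z \<le> Phi (f z) + psi z - Phi 0"
    using AEfin
  proof eventually_elim
    case (elim z)
    define F where "F = Phi_ext_conj Phi (g z)"
    have F1: "ereal (f z * g z - Phi (f z)) \<le> F" unfolding F_def by (rule conj_ge[OF fnn])
    have F2: "ereal (0 * g z - Phi 0) \<le> F" unfolding F_def by (rule conj_ge) simp
    have "F + ereal (Phi 0) \<noteq> \<infinity>"
    proof
      assume "F + ereal (Phi 0) = \<infinity>"
      then have "Psi z = \<infinity>" unfolding Psi_def F_def[symmetric] by simp
      with elim show False by simp
    qed
    then obtain r where r: "F = ereal r" using F2 by (cases F) auto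
    have r0: "r + Phi 0 \<ge> 0" using F2 r by simp
    have "psi z = r + Phi 0" unfolding psi_def Psi_def F_def[symmetric] r using r0 by simp
    moreover have "f z * g z - Phi (f z) \<le> r" using F1 r by simp
    ultimately show ?case by simp
  qed
  have "(\<integral>z. f z * g z \<partial>N) \<le> (\<integral>z. Phi (f z) + psi z - Phi 0 \<partial>N)"
    using intfg intPf intpsi pw by (intro integral_mono_AE) auto
  also have "\<dots> = (\<integral>z. Phi (f z) \<partial>N) + (\<integral>z. psi z \<partial>N) - Phi 0"
    using intPf intpsi by (simp add: N.prob_space)
  finally show ?thesis using geq Deq ipsi unfolding Psi_def by simp
qed

locale mt =
  fixes Phi :: "real \<Rightarrow> real" and rho :: "((real^'d) \<times> (real^'d)) measure" and xi :: real
  assumes Phi: "admissible_Phi Phi"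
    and prob: "prob_space rho"
    and sets_rho[measurable_cong]: "sets rho = sets borel"
    and intX: "integrable rho (\<lambda>z. (norm (fst z))\<^sup>2)"
    and intY: "integrable rho (\<lambda>z. (norm (snd z))\<^sup>2)"
    and xi_pos: "0 < xi"
    and hyp: "\<forall>\<theta>::real^'d.
       (INF a\<in>(UNIV::real set).
          ext_integral (distr rho borel snd)
            (\<lambda>y. Phi_ext_conj Phi (\<theta> \<bullet> (y - (\<integral>z. snd z \<partial>rho)) - a)) + ereal a)
       \<le> ereal ((norm \<theta>)\<^sup>2 * xi\<^sup>2 / 2)"
    and MIfin: "Phi_MI Phi rho \<noteq> \<infinity>"
begin

definition "MX = distr rho borel fst"
definition "MY = distr rho borel snd"
definition "nu = MX \<Otimes>\<^sub>M MY"
definition "mX = (\<integral>z. fst z \<partial>rho)"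
definition "mY = (\<integral>z. snd z \<partial>rho)"
definition "D = real_of_ereal (Phi_MI Phi rho)"

lemma meas_fst[measurable]: "fst \<in> borel_measurable rho"
  unfolding measurable_cong_sets[OF sets_rho refl] by (intro borel_measurable_continuous_onI continuous_intros)
lemma meas_snd[measurable]: "snd \<in> borel_measurable rho"
  unfolding measurable_cong_sets[OF sets_rho refl] by (intro borel_measurable_continuous_onI continuous_intros)
lemma meas_fst'[measurable]: "fst \<in> measurable rho borel" by (rule meas_fst)

lemma MX_prob: "prob_space MX" unfolding MX_def
  by (rule prob_space.prob_space_distr[OF prob]) simp
lemma MY_prob: "prob_space MY" unfolding MY_def
  by (rule prob_space.prob_space_distr[OF prob]) simp
lemma sets_MX[measurable_cong]: "sets MX = sets borel" unfolding MX_def by simp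
lemma sets_MY[measurable_cong]: "sets MY = sets borel" unfolding MY_def by simp

lemma pps: "pair_prob_space MX MY"
proof -
  interpret X: prob_space MX by (rule MX_prob)
  interpret Y: prob_space MY by (rule MY_prob)
  show ?thesis by unfold_locales
qed

lemma nu_prob: "prob_space nu"
proof -
  interpret pair_prob_space MX MY by (rule pps)
  show ?thesis unfolding nu_def by unfold_locales
qed

lemma sets_nu[measurable_cong]: "sets nu = sets borel"
proof -
  have "sets nu = sets (borel \<Otimes>\<^sub>M borel :: ((real^'d) \<times> (real^'d)) measure)"
    unfolding nu_def by (rule sets_pair_measure_cong[OF sets_MX sets_MY])
  then show ?thesis by (simp only: borel_prod)
qed

lemma MI_facts:
  "sets rho = sets nu" "absolutely_continuous nu rho"
  "Phi_MI Phi rho = ext_integral nu (\<lambda>z. ereal (Phi (enn2real (RN_deriv nu rho z))))"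
proof -
  have e: "Phi_MI Phi rho = Phi_div Phi rho nu" unfolding Phi_MI_def nu_def MX_def MY_def ..
  show s: "sets rho = sets nu" using sets_rho sets_nu by simp
  show a: "absolutely_continuous nu rho"
    using MIfin unfolding e Phi_div_def by (auto split: if_splits)
  show "Phi_MI Phi rho = ext_integral nu (\<lambda>z. ereal (Phi (enn2real (RN_deriv nu rho z))))"
    unfolding e Phi_div_def using s a by simp
qed

lemma int_norm_fst: "integrable rho (\<lambda>z. norm (fst z))"
proof -
  interpret P: prob_space rho by (rule prob)
  show ?thesis by (rule P.square_integrable_imp_integrable) (use intX in auto)
qed
lemma int_norm_snd: "integrable rho (\<lambda>z. norm (snd z))"
proof -
  interpret P: prob_space rho by (rule prob)
  show ?thesis by (rule P.square_integrable_imp_integrable) (use intY in auto)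
qed
lemma int_fst: "integrable rho fst"
  by (rule integrable_norm_cancel[OF int_norm_fst]) simp
lemma int_snd: "integrable rho snd"
  by (rule integrable_norm_cancel[OF int_norm_snd]) simp

end

lemma abs_prod_le_sq: "\<bar>(a::real) * b\<bar> \<le> a\<^sup>2 + b\<^sup>2"
proof -
  have "2 * (\<bar>a\<bar> * \<bar>b\<bar>) \<le> a\<^sup>2 + b\<^sup>2" using sum_squares_bound[of "\<bar>a\<bar>" "\<bar>b\<bar>"] by (simp add: mult.assoc)
  moreover have "\<bar>a\<bar> * \<bar>b\<bar> \<ge> 0" by simp
  ultimately show ?thesis unfolding abs_mult by linarith
qed

lemma int_prod_sq:
  fixes f g :: "'a \<Rightarrow> real"
  assumes [measurable]: "f \<in> borel_measurable M" "g \<in> borel_measurable M"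
    and "integrable M (\<lambda>x. (f x)\<^sup>2)" "integrable M (\<lambda>x. (g x)\<^sup>2)"
  shows "integrable M (\<lambda>x. f x * g x)"
proof (rule Bochner_Integration.integrable_bound[where f="\<lambda>x. (f x)\<^sup>2 + (g x)\<^sup>2"])
  show "integrable M (\<lambda>x. (f x)\<^sup>2 + (g x)\<^sup>2)" using assms by simp
  show "AE x in M. norm (f x * g x) \<le> norm ((f x)\<^sup>2 + (g x)\<^sup>2)"
    using abs_prod_le_sq by simp
qed simp

lemma int_sq_bound:
  fixes f h :: "'a \<Rightarrow> real"
  assumes [measurable]: "f \<in> borel_measurable M" and "integrable M h"
    and "\<And>x. x \<in> space M \<Longrightarrow> (f x)\<^sup>2 \<le> h x"
  shows "integrable M (\<lambda>x. (f x)\<^sup>2)"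
proof (rule Bochner_Integration.integrable_bound[where f=h])
  show "AE x in M. norm ((f x)\<^sup>2) \<le> norm (h x)"
    using assms(3) by (auto intro!: AE_I2 order_trans[OF _ abs_ge_self])
qed (use assms in auto)

lemma inner_diff_sq_le:
  fixes v x m :: "'a::real_inner"
  shows "(v \<bullet> (x - m))\<^sup>2 \<le> 2 * (norm v)\<^sup>2 * ((norm x)\<^sup>2 + (norm m)\<^sup>2)"
proof -
  have "\<bar>v \<bullet> (x - m)\<bar> \<le> norm v * norm (x - m)" by (rule Cauchy_Schwarz_ineq2)
  also have "\<dots> \<le> norm v * (norm x + norm m)"
    by (intro mult_left_mono norm_triangle_ineq4) simp
  finally have "(v \<bullet> (x - m))\<^sup>2 \<le> (norm v * (norm x + norm m))\<^sup>2"
    by (metis abs_ge_zero power2_abs power_mono)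
  also have "\<dots> = (norm v)\<^sup>2 * (norm x + norm m)\<^sup>2" by (simp add: power_mult_distrib)
  also have "\<dots> \<le> (norm v)\<^sup>2 * (2 * ((norm x)\<^sup>2 + (norm m)\<^sup>2))"
  proof (rule mult_left_mono)
    have "2 * norm x * norm m \<le> (norm x)\<^sup>2 + (norm m)\<^sup>2" by (rule sum_squares_bound)
    then show "(norm x + norm m)\<^sup>2 \<le> 2 * ((norm x)\<^sup>2 + (norm m)\<^sup>2)"
      by (simp add: power2_sum)
  qed simp
  finally show ?thesis by (simp add: algebra_simps)
qed

context mt begin

lemma int_const[simp]: "integrable rho (\<lambda>z. c)"
proof -
  interpret P: prob_space rho by (rule prob)
  show ?thesis by simp
qed

lemma int_add_const: "integrable rho f \<Longrightarrow> integrable rho (\<lambda>z. f z + c)"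
  by simp

lemma int_s2: "integrable rho (\<lambda>z. (v \<bullet> (fst z - mX))\<^sup>2)"
  by (rule int_sq_bound[of _ _ "\<lambda>z. 2 * (norm v)\<^sup>2 * ((norm (fst z))\<^sup>2 + (norm mX)\<^sup>2)"])
    (use intX in \<open>auto intro: inner_diff_sq_le int_add_const\<close>)

lemma int_w2: "integrable rho (\<lambda>z. (u \<bullet> (snd z - mY))\<^sup>2)"
  by (rule int_sq_bound[of _ _ "\<lambda>z. 2 * (norm u)\<^sup>2 * ((norm (snd z))\<^sup>2 + (norm mY)\<^sup>2)"])
    (use intY in \<open>auto intro: inner_diff_sq_le int_add_const\<close>)

end

lemma ennreal_integral_le:
  fixes h :: "'a \<Rightarrow> real"
  assumes h: "integrable M h"
  shows "ennreal (integral\<^sup>L M h) \<le> (\<integral>\<^sup>+x. ennreal (h x) \<partial>M)"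
proof -
  have "integral\<^sup>L M h \<le> (\<integral>x. max (h x) 0 \<partial>M)"
    using h by (intro integral_mono) auto
  then have "ennreal (integral\<^sup>L M h) \<le> ennreal (\<integral>x. max (h x) 0 \<partial>M)"
    by (rule ennreal_leI)
  also have "\<dots> = (\<integral>\<^sup>+x. ennreal (max (h x) 0) \<partial>M)"
    using h by (intro nn_integral_eq_integral[symmetric]) auto
  also have "\<dots> = (\<integral>\<^sup>+x. ennreal (h x) \<partial>M)"
    by (intro nn_integral_cong) (simp add: max_def ennreal_neg)
  finally show ?thesis .
qed

context mt begin

lemma meas_conj[measurable]: "Phi_ext_conj Phi \<in> borel_measurable borel"
  by (rule conj_meas[OF Phi_facts(1)[OF Phi]])

lemma int_w_MY: "integrable MY (\<lambda>y. u \<bullet> (y - mY))"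
proof -
  have "integrable rho (\<lambda>z. u \<bullet> (snd z - mY))"
    using int_snd by (intro integrable_inner_right) simp
  then show ?thesis unfolding MY_def by (subst integrable_distr_eq) auto
qed

lemma mean_w_MY: "(\<integral>y. u \<bullet> (y - mY) \<partial>MY) = 0"
proof -
  interpret P: prob_space rho by (rule prob)
  have "(\<integral>y. u \<bullet> (y - mY) \<partial>MY) = (\<integral>z. u \<bullet> (snd z - mY) \<partial>rho)"
    unfolding MY_def by (rule integral_distr) auto
  also have "\<dots> = u \<bullet> (\<integral>z. snd z - mY \<partial>rho)"
    using int_snd by (intro integral_inner_right) simp
  also have "(\<integral>z. snd z - mY \<partial>rho) = mY - mY"
    using int_snd by (simp add: Bochner_Integration.integral_diff mY_def P.prob_space)
  finally show ?thesis by simp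
qed

lemma hyp_ex:
  assumes u: "norm u = 1" and e: "e > 0"
  shows "\<exists>a. ext_integral MY (\<lambda>y. Phi_ext_conj Phi (t * (u \<bullet> (y - mY)) - a)) + ereal a < ereal (t\<^sup>2 * xi\<^sup>2 / 2 + e)"
proof -
  have h: "(INF a\<in>(UNIV::real set). ext_integral MY (\<lambda>y. Phi_ext_conj Phi ((t *\<^sub>R u) \<bullet> (y - mY) - a)) + ereal a)
       \<le> ereal ((norm (t *\<^sub>R u))\<^sup>2 * xi\<^sup>2 / 2)"
    using hyp unfolding MY_def mY_def by blast
  have "(norm (t *\<^sub>R u))\<^sup>2 = t\<^sup>2" using u by (simp add: power_mult_distrib)
  then have "(INF a\<in>(UNIV::real set). ext_integral MY (\<lambda>y. Phi_ext_conj Phi ((t *\<^sub>R u) \<bullet> (y - mY) - a)) + ereal a)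
       < ereal (t\<^sup>2 * xi\<^sup>2 / 2 + e)" using h e by (simp add: le_less_trans)
  then obtain a where "ext_integral MY (\<lambda>y. Phi_ext_conj Phi ((t *\<^sub>R u) \<bullet> (y - mY) - a)) + ereal a < ereal (t\<^sup>2 * xi\<^sup>2 / 2 + e)"
    by (auto simp: INF_less_iff)
  then show ?thesis by (intro exI[of _ a]) simp
qed

lemma psi_bound:
  assumes ha: "ext_integral MY (\<lambda>y. Phi_ext_conj Phi (t * (u \<bullet> (y - mY)) - a)) + ereal a < ereal R"
  shows "(\<integral>\<^sup>+y. e2ennreal (Phi_ext_conj Phi (t * (u \<bullet> (y - mY)) - a) + ereal (Phi 0)) \<partial>MY) \<le> ennreal (R - a + Phi 0)"
    "0 \<le> R - a + Phi 0"
    "min ((Phi 0 - Phi 2) / 2) (- R - Phi 2) \<le> a"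
proof -
  interpret Y: prob_space MY by (rule MY_prob)
  define F where "F y = Phi_ext_conj Phi (t * (u \<bullet> (y - mY)) - a)" for y
  have Fm[measurable]: "F \<in> borel_measurable MY" unfolding F_def by measurable
  have lb: "F y \<ge> ereal (- Phi 0)" for y
    using conj_ge[of 0 "t * (u \<bullet> (y - mY)) - a" Phi] unfolding F_def by simp
  define I where "I = (\<integral>\<^sup>+y. e2ennreal (F y + ereal (Phi 0)) \<partial>MY)"
  have sh: "enn2ereal I = ext_integral MY F + ereal (Phi 0)"
    unfolding I_def by (rule ext_integral_shift[OF MY_prob Fm lb])
  have ha': "ext_integral MY F + ereal a < ereal R" using ha unfolding F_def .
  have I1: "enn2ereal I < ereal (R - a + Phi 0)"
  proof -
    have "ext_integral MY F \<noteq> - \<infinity>"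
    proof
      assume "ext_integral MY F = - \<infinity>"
      then have "enn2ereal I = - \<infinity>" using sh by simp
      then show False using enn2ereal_nonneg[of I] by simp
    qed
    then show ?thesis using sh ha' by (cases "ext_integral MY F") auto
  qed
  have I0: "0 \<le> enn2ereal I" by simp
  show pos: "0 \<le> R - a + Phi 0" using le_less_trans[OF I0 I1] by simp
  show Ile: "(\<integral>\<^sup>+y. e2ennreal (Phi_ext_conj Phi (t * (u \<bullet> (y - mY)) - a) + ereal (Phi 0)) \<partial>MY) \<le> ennreal (R - a + Phi 0)"
    unfolding F_def[symmetric] I_def[symmetric] using I1 pos
    by (simp add: less_eq_ennreal.rep_eq)
  have J: "(\<integral>\<^sup>+y. ennreal (2 * (t * (u \<bullet> (y - mY)) - a) - Phi 2 + Phi 0) \<partial>MY) \<le> I"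
    unfolding I_def
  proof (rule nn_integral_mono)
    fix y
    have "ereal (2 * (t * (u \<bullet> (y - mY)) - a) - Phi 2) \<le> F y"
      unfolding F_def by (rule conj_ge) simp
    then have "ereal (2 * (t * (u \<bullet> (y - mY)) - a) - Phi 2 + Phi 0) \<le> F y + ereal (Phi 0)"
      by (cases "F y") auto
    then show "ennreal (2 * (t * (u \<bullet> (y - mY)) - a) - Phi 2 + Phi 0) \<le> e2ennreal (F y + ereal (Phi 0))"
      using e2ennreal_mono by fastforce
  qed
  have inth: "integrable MY (\<lambda>y. 2 * (t * (u \<bullet> (y - mY)) - a) - Phi 2 + Phi 0)"
    using int_w_MY by simp
  have "(\<integral>y. 2 * (t * (u \<bullet> (y - mY)) - a) - Phi 2 + Phi 0 \<partial>MY) = - 2 * a - Phi 2 + Phi 0"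
  proof -
    define w where "w y = u \<bullet> (y - mY)" for y
    have iw: "integrable MY w" unfolding w_def by (rule int_w_MY)
    have mw: "(\<integral>y. w y \<partial>MY) = 0" unfolding w_def by (rule mean_w_MY)
    have "(\<integral>y. 2 * (t * w y - a) - Phi 2 + Phi 0 \<partial>MY) = (\<integral>y. (2 * t) * w y + (- 2 * a - Phi 2 + Phi 0) \<partial>MY)"
      by (rule Bochner_Integration.integral_cong) (auto simp: algebra_simps)
    also have "\<dots> = (2 * t) * (\<integral>y. w y \<partial>MY) + (- 2 * a - Phi 2 + Phi 0)"
      using iw by (simp add: Y.prob_space)
    finally show ?thesis using mw unfolding w_def by simp
  qed
  then have "ennreal (- 2 * a - Phi 2 + Phi 0) \<le> ennreal (R - a + Phi 0)"
    using ennreal_integral_le[OF inth] J Ile unfolding F_def[symmetric] I_def[symmetric] by simp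
  then show "min ((Phi 0 - Phi 2) / 2) (- R - Phi 2) \<le> a"
    by (cases "- 2 * a - Phi 2 + Phi 0 > 0") (auto simp: ennreal_le_iff2 ennreal_le_iff min_le_iff_disj)
qed

end

lemma floor_approx:
  assumes d: "(d::real) > 0"
  shows "d * of_int \<lfloor>x / d\<rfloor> \<le> x" "x - d < d * of_int \<lfloor>x / d\<rfloor>"
proof -
  have "of_int \<lfloor>x / d\<rfloor> \<le> x / d" by (rule of_int_floor_le)
  then have "d * of_int \<lfloor>x / d\<rfloor> \<le> d * (x / d)" using d by (intro mult_left_mono) auto
  then show "d * of_int \<lfloor>x / d\<rfloor> \<le> x" using d by simp
  have "x / d < of_int \<lfloor>x / d\<rfloor> + 1" by (rule real_of_int_floor_add_one_gt)
  then have "d * (x / d) < d * (of_int \<lfloor>x / d\<rfloor> + 1)" using d by (intro mult_strict_left_mono) auto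
  then show "x - d < d * of_int \<lfloor>x / d\<rfloor>" using d by (simp add: algebra_simps)
qed

lemma floor_approx_sq:
  assumes d: "(d::real) > 0"
  shows "(d * of_int \<lfloor>x / d\<rfloor>)\<^sup>2 \<le> 2 * x\<^sup>2 + 2 * d\<^sup>2"
proof -
  define e where "e = x - d * of_int \<lfloor>x / d\<rfloor>"
  have e: "0 \<le> e" "e < d" using floor_approx[OF d, of x] unfolding e_def by auto
  have "(d * of_int \<lfloor>x / d\<rfloor>) = x - e" unfolding e_def by simp
  moreover have "(x - e)\<^sup>2 \<le> 2 * x\<^sup>2 + 2 * e\<^sup>2"
    using sum_squares_bound[of x "-e"] by (simp add: power2_diff)
  moreover have "e\<^sup>2 \<le> d\<^sup>2" using e by (intro power_mono) auto
  ultimately show ?thesis by simp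
qed

lemma meas_int_fun[measurable]:
  "(\<lambda>x. f (\<lfloor>g x\<rfloor>) :: real) \<in> borel_measurable M" if [measurable]: "g \<in> borel_measurable M" for f :: "int \<Rightarrow> real" and g :: "'a \<Rightarrow> real"
proof -
  have "(\<lambda>x. \<lfloor>g x\<rfloor>) \<in> measurable M (count_space UNIV)" by (rule measurable_compose[OF that measurable_real_floor])
  then show ?thesis by (rule measurable_compose) simp
qed

context mt begin

lemma meas_fst_b[measurable]: "fst \<in> borel_measurable (borel :: ((real^'d) \<times> (real^'d)) measure)"
  by (intro borel_measurable_continuous_onI continuous_intros)
lemma meas_snd_b[measurable]: "snd \<in> borel_measurable (borel :: ((real^'d) \<times> (real^'d)) measure)"
  by (intro borel_measurable_continuous_onI continuous_intros)

lemma step: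
  fixes u v :: "real^'d" and lam del eps :: real
  assumes u: "norm u = 1" and del: "del > 0" and eps: "eps > 0"
  shows "lam * (\<integral>z. (del * of_int \<lfloor>(v \<bullet> (fst z - mX)) / del\<rfloor>) * (u \<bullet> (snd z - mY)) \<partial>rho) - D
     \<le> lam\<^sup>2 * xi\<^sup>2 / 2 * (\<integral>z. (del * of_int \<lfloor>(v \<bullet> (fst z - mX)) / del\<rfloor>)\<^sup>2 \<partial>rho) + eps"
proof -
  interpret P: prob_space rho by (rule prob)
  interpret X: prob_space MX by (rule MX_prob)
  interpret Y: prob_space MY by (rule MY_prob)
  define s where "s x = v \<bullet> (x - mX)" for x
  define Sd where "Sd x = del * of_int \<lfloor>s x / del\<rfloor>" for x
  define w where "w y = u \<bullet> (y - mY)" for y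
  define T where "T j = lam * del * of_int j" for j :: int
  define R where "R j = (T j)\<^sup>2 * xi\<^sup>2 / 2 + eps" for j :: int
  have sm[measurable]: "s \<in> borel_measurable borel" unfolding s_def by measurable
  have wm[measurable]: "w \<in> borel_measurable borel" unfolding w_def by measurable
  have TSd: "T \<lfloor>s x / del\<rfloor> = lam * Sd x" for x unfolding T_def Sd_def by simp
  have "\<forall>j. \<exists>a. ext_integral MY (\<lambda>y. Phi_ext_conj Phi (T j * w y - a)) + ereal a < ereal (R j)"
    using hyp_ex[OF u eps] unfolding w_def R_def by blast
  then obtain A where hA: "\<And>j. ext_integral MY (\<lambda>y. Phi_ext_conj Phi (T j * w y - A j)) + ereal (A j) < ereal (R j)"
    by metis
  note PB = psi_bound[OF hA[unfolded w_def]]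
  have PB1: "(\<integral>\<^sup>+y. e2ennreal (Phi_ext_conj Phi (T j * w y - A j) + ereal (Phi 0)) \<partial>MY) \<le> ennreal (R j - A j + Phi 0)" for j
    using PB(1)[of j] unfolding w_def .
  have PB2: "0 \<le> R j - A j + Phi 0" for j using PB(2)[of j] .
  have Abound: "\<bar>A j\<bar> \<le> R j + \<bar>Phi 2\<bar> + \<bar>Phi 0\<bar>" for j
  proof -
    have "R j \<ge> 0" unfolding R_def using eps by simp
    then show ?thesis using PB(2)[of j] PB(3)[of j] by (auto simp: min_def split: if_splits)
  qed
  define kx where "kx x = \<lfloor>s x / del\<rfloor>" for x
  define AK where "AK x = A (kx x)" for x
  define RK where "RK x = R (kx x)" for x
  define H where "H x = RK x - AK x + Phi 0" for x
  have AKm[measurable]: "AK \<in> borel_measurable borel" unfolding AK_def kx_def by measurable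
  have RKm[measurable]: "RK \<in> borel_measurable borel" unfolding RK_def kx_def by measurable
  have Hm[measurable]: "H \<in> borel_measurable borel" unfolding H_def by measurable
  have Sdm[measurable]: "Sd \<in> borel_measurable borel" unfolding Sd_def by measurable
  have RKe: "RK x = lam\<^sup>2 * xi\<^sup>2 / 2 * (Sd x)\<^sup>2 + eps" for x
    unfolding RK_def R_def kx_def TSd by (simp add: power_mult_distrib)
  have Hnn: "H x \<ge> 0" for x unfolding H_def AK_def RK_def using PB2 by simp
  have AKb: "\<bar>AK x\<bar> \<le> RK x + \<bar>Phi 2\<bar> + \<bar>Phi 0\<bar>" for x unfolding AK_def RK_def by (rule Abound)
  have iSd2: "integrable rho (\<lambda>z. (Sd (fst z))\<^sup>2)"
  proof (rule int_sq_bound[where h="\<lambda>z. 2 * (s (fst z))\<^sup>2 + 2 * del\<^sup>2"])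
    show "integrable rho (\<lambda>z. 2 * (s (fst z))\<^sup>2 + 2 * del\<^sup>2)"
      using int_s2[of v] unfolding s_def by simp
    show "(Sd (fst z))\<^sup>2 \<le> 2 * (s (fst z))\<^sup>2 + 2 * del\<^sup>2" for z
      unfolding Sd_def by (rule floor_approx_sq[OF del])
  qed measurable
  have iw2: "integrable rho (\<lambda>z. (w (snd z))\<^sup>2)" using int_w2[of u] unfolding w_def .
  have iSdw: "integrable rho (\<lambda>z. Sd (fst z) * w (snd z))"
    by (rule int_prod_sq[OF _ _ iSd2 iw2]) measurable
  have iRK: "integrable rho (\<lambda>z. RK (fst z))" unfolding RKe using iSd2 by simp
  have iAK: "integrable rho (\<lambda>z. AK (fst z))"
  proof (rule Bochner_Integration.integrable_bound[where f="\<lambda>z. RK (fst z) + \<bar>Phi 2\<bar> + \<bar>Phi 0\<bar>"])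
    show "integrable rho (\<lambda>z. RK (fst z) + \<bar>Phi 2\<bar> + \<bar>Phi 0\<bar>)" using iRK by simp
    show "AE z in rho. norm (AK (fst z)) \<le> norm (RK (fst z) + \<bar>Phi 2\<bar> + \<bar>Phi 0\<bar>)"
      using AKb by (auto intro!: AE_I2 order_trans[OF _ abs_ge_self])
  qed measurable
  have iH: "integrable rho (\<lambda>z. H (fst z))" unfolding H_def using iRK iAK by simp
  have iHX: "integrable MX H" unfolding MX_def by (subst integrable_distr_eq) (use iH in auto)
  have intHX: "(\<integral>x. H x \<partial>MX) = (\<integral>z. H (fst z) \<partial>rho)" unfolding MX_def by (rule integral_distr) auto
  define g where "g z = lam * (Sd (fst z) * w (snd z)) - AK (fst z)" for z
  have gm[measurable]: "g \<in> borel_measurable nu"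
    unfolding measurable_cong_sets[OF sets_nu refl] g_def by measurable
  have ig: "integrable rho g" unfolding g_def using iSdw iAK by simp
  have g_xy: "g (x, y) = T (kx x) * w y - A (kx x)" for x y
    unfolding g_def AK_def kx_def TSd by simp
  define Psi where "Psi z = e2ennreal (Phi_ext_conj Phi (g z) + ereal (Phi 0))" for z
  have Psim[measurable]: "Psi \<in> borel_measurable (MX \<Otimes>\<^sub>M MY)"
    using gm unfolding Psi_def nu_def by measurable
  have "(\<integral>\<^sup>+z. Psi z \<partial>nu) = (\<integral>\<^sup>+x. \<integral>\<^sup>+y. Psi (x, y) \<partial>MY \<partial>MX)"
    unfolding nu_def by (rule Y.nn_integral_fst[symmetric]) (rule Psim)
  also have "\<dots> \<le> (\<integral>\<^sup>+x. ennreal (H x) \<partial>MX)"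
  proof (rule nn_integral_mono)
    fix x
    have "(\<integral>\<^sup>+y. Psi (x, y) \<partial>MY) = (\<integral>\<^sup>+y. e2ennreal (Phi_ext_conj Phi (T (kx x) * w y - A (kx x)) + ereal (Phi 0)) \<partial>MY)"
      unfolding Psi_def g_xy ..
    also have "\<dots> \<le> ennreal (H x)" unfolding H_def RK_def AK_def by (rule PB1)
    finally show "(\<integral>\<^sup>+y. Psi (x, y) \<partial>MY) \<le> ennreal (H x)" .
  qed
  also have "\<dots> = ennreal (\<integral>x. H x \<partial>MX)"
    using iHX Hnn by (intro nn_integral_eq_integral) auto
  finally have Ile: "(\<integral>\<^sup>+z. Psi z \<partial>nu) \<le> ennreal (\<integral>x. H x \<partial>MX)" .
  have fin: "(\<integral>\<^sup>+z. Psi z \<partial>nu) < \<infinity>" by (rule le_less_trans[OF Ile]) simp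
  have Dfin: "ext_integral nu (\<lambda>z. ereal (Phi (enn2real (RN_deriv nu rho z)))) \<noteq> \<infinity>"
    using MIfin MI_facts(3) by simp
  have V: "(\<integral>z. g z \<partial>rho) + Phi 0 - real_of_ereal (ext_integral nu (\<lambda>z. ereal (Phi (enn2real (RN_deriv nu rho z)))))
     \<le> enn2real (\<integral>\<^sup>+z. Psi z \<partial>nu)"
    unfolding Psi_def
    by (rule variational[OF Phi nu_prob prob MI_facts(1) MI_facts(2) Dfin gm ig fin[unfolded Psi_def]])
  have DD: "real_of_ereal (ext_integral nu (\<lambda>z. ereal (Phi (enn2real (RN_deriv nu rho z))))) = D"
    unfolding D_def MI_facts(3) ..
  have "enn2real (\<integral>\<^sup>+z. Psi z \<partial>nu) \<le> (\<integral>x. H x \<partial>MX)"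
  proof -
    have HI0: "0 \<le> (\<integral>x. H x \<partial>MX)" using Hnn by (simp add: Bochner_Integration.integral_nonneg)
    have "enn2real (\<integral>\<^sup>+z. Psi z \<partial>nu) \<le> enn2real (ennreal (\<integral>x. H x \<partial>MX))"
      by (rule enn2real_mono[OF Ile]) simp
    then show ?thesis using HI0 by simp
  qed
  then have main: "(\<integral>z. g z \<partial>rho) + Phi 0 - D \<le> (\<integral>z. H (fst z) \<partial>rho)"
    using V DD intHX by simp
  have eg: "(\<integral>z. g z \<partial>rho) = lam * (\<integral>z. Sd (fst z) * w (snd z) \<partial>rho) - (\<integral>z. AK (fst z) \<partial>rho)"
    unfolding g_def using iSdw iAK by simp
  have eH: "(\<integral>z. H (fst z) \<partial>rho) = lam\<^sup>2 * xi\<^sup>2 / 2 * (\<integral>z. (Sd (fst z))\<^sup>2 \<partial>rho) + eps - (\<integral>z. AK (fst z) \<partial>rho) + Phi 0"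
    unfolding H_def RKe using iSd2 iAK by (simp add: P.prob_space)
  have "lam * (\<integral>z. Sd (fst z) * w (snd z) \<partial>rho) - D \<le> lam\<^sup>2 * xi\<^sup>2 / 2 * (\<integral>z. (Sd (fst z))\<^sup>2 \<partial>rho) + eps"
    using main eg eH by simp
  then show ?thesis unfolding Sd_def s_def w_def .
qed
end

lemma quad_bound:
  fixes c1 c2 D xi :: real
  assumes xi: "xi > 0" and c2: "c2 \<ge> 0"
    and h: "\<And>lam. lam * c1 - D \<le> lam\<^sup>2 * xi\<^sup>2 / 2 * c2"
  shows "c1\<^sup>2 \<le> 2 * xi\<^sup>2 * D * c2" "D \<ge> 0"
proof -
  show D0: "D \<ge> 0" using h[of 0] by simp
  show "c1\<^sup>2 \<le> 2 * xi\<^sup>2 * D * c2"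
  proof (cases "c2 = 0")
    case True
    have "c1 = 0"
    proof (rule ccontr)
      assume "c1 \<noteq> 0"
      have "((D + 1) / c1) * c1 - D \<le> 0" using h[of "(D + 1) / c1"] True by simp
      then show False using \<open>c1 \<noteq> 0\<close> by simp
    qed
    then show ?thesis using True by simp
  next
    case False
    then have c2p: "c2 > 0" using c2 by simp
    define lam where "lam = c1 / (xi\<^sup>2 * c2)"
    define X where "X = c1\<^sup>2 / (xi\<^sup>2 * c2)"
    have x2: "xi\<^sup>2 > 0" using xi by simp
    have hl: "lam * c1 - D \<le> lam\<^sup>2 * xi\<^sup>2 / 2 * c2" by (rule h)
    have e1: "lam * c1 = X" unfolding lam_def X_def by (simp add: power2_eq_square)
    have e2: "lam\<^sup>2 * xi\<^sup>2 / 2 * c2 = X / 2"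
      unfolding lam_def X_def using x2 c2p by (simp add: power2_eq_square field_simps)
    have "X \<le> 2 * D" using hl unfolding e1 e2 by simp
    moreover have "X * (xi\<^sup>2 * c2) = c1\<^sup>2" unfolding X_def using x2 c2p by simp
    ultimately have "c1\<^sup>2 \<le> 2 * D * (xi\<^sup>2 * c2)"
      using mult_right_mono[of X "2 * D" "xi\<^sup>2 * c2"] x2 c2p by simp
    then show ?thesis by (simp add: algebra_simps)
  qed
qed

context mt begin

lemma int_abs_sq:
  fixes f :: "_ \<Rightarrow> real"
  assumes [measurable]: "f \<in> borel_measurable rho" and "integrable rho (\<lambda>z. (f z)\<^sup>2)"
  shows "integrable rho (\<lambda>z. \<bar>f z\<bar>)"
proof -
  interpret P: prob_space rho by (rule prob)
  have "integrable rho f" by (rule P.square_integrable_imp_integrable) (use assms in auto)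
  then show ?thesis by simp
qed

lemma lam_bound:
  fixes u v :: "real^'d" and lam :: real
  assumes u: "norm u = 1"
  shows "lam * (\<integral>z. (v \<bullet> (fst z - mX)) * (u \<bullet> (snd z - mY)) \<partial>rho) - D
     \<le> lam\<^sup>2 * xi\<^sup>2 / 2 * (\<integral>z. (v \<bullet> (fst z - mX))\<^sup>2 \<partial>rho)"
proof -
  interpret P: prob_space rho by (rule prob)
  define s where "s z = v \<bullet> (fst z - mX)" for z :: "(real^'d) \<times> (real^'d)"
  define w where "w z = u \<bullet> (snd z - mY)" for z :: "(real^'d) \<times> (real^'d)"
  have sm[measurable]: "s \<in> borel_measurable rho" unfolding s_def by measurable
  have wm[measurable]: "w \<in> borel_measurable rho" unfolding w_def by measurable
  have is2: "integrable rho (\<lambda>z. (s z)\<^sup>2)" unfolding s_def by (rule int_s2)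
  have iw2: "integrable rho (\<lambda>z. (w z)\<^sup>2)" unfolding w_def by (rule int_w2)
  have isw: "integrable rho (\<lambda>z. s z * w z)" by (rule int_prod_sq[OF sm wm is2 iw2])
  have ias: "integrable rho (\<lambda>z. \<bar>s z\<bar>)" by (rule int_abs_sq[OF sm is2])
  have iaw: "integrable rho (\<lambda>z. \<bar>w z\<bar>)" by (rule int_abs_sq[OF wm iw2])
  define c1 where "c1 = (\<integral>z. s z * w z \<partial>rho)"
  define c2 where "c2 = (\<integral>z. (s z)\<^sup>2 \<partial>rho)"
  define Ea where "Ea = (\<integral>z. \<bar>s z\<bar> \<partial>rho)"
  define Eb where "Eb = (\<integral>z. \<bar>w z\<bar> \<partial>rho)"
  define K where "K = \<bar>lam\<bar> * Eb + lam\<^sup>2 * xi\<^sup>2 / 2 * (2 * Ea + 1)"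
  have Eb0: "Eb \<ge> 0" unfolding Eb_def by (simp add: Bochner_Integration.integral_nonneg)
  have Ea0: "Ea \<ge> 0" unfolding Ea_def by (simp add: Bochner_Integration.integral_nonneg)
  have K0: "K \<ge> 0" unfolding K_def using Ea0 Eb0 by simp
  have "lam * c1 - D \<le> lam\<^sup>2 * xi\<^sup>2 / 2 * c2 + e" if e: "e > 0" for e
  proof -
    define del where "del = min 1 (e / (2 * (K + 1)))"
    have del0: "del > 0" unfolding del_def using e K0 by simp
    have del1: "del \<le> 1" unfolding del_def by simp
    have delK: "del * K \<le> e / 2"
    proof -
      have "del \<le> e / (2 * (K + 1))" unfolding del_def by simp
      then have "del * K \<le> e / (2 * (K + 1)) * K" using K0 by (intro mult_right_mono) auto
      also have "\<dots> \<le> e / 2" using K0 e by (simp add: field_simps)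
      finally show ?thesis .
    qed
    define Sd where "Sd z = del * of_int \<lfloor>s z / del\<rfloor>" for z
    have Sdm[measurable]: "Sd \<in> borel_measurable rho" unfolding Sd_def by measurable
    have SA: "Sd z \<le> s z" "s z - del < Sd z" for z unfolding Sd_def using floor_approx[OF del0] by auto
    have P2: "(Sd z)\<^sup>2 \<le> (s z)\<^sup>2 + del * (2 * \<bar>s z\<bar> + del)" for z
    proof -
      define d where "d = s z - Sd z"
      have d: "0 \<le> d" "d \<le> del" using SA[of z] unfolding d_def by auto
      have "(Sd z)\<^sup>2 = (s z)\<^sup>2 - 2 * (s z) * d + d\<^sup>2" unfolding d_def by (simp add: power2_eq_square algebra_simps)
      also have "- 2 * (s z) * d \<le> 2 * \<bar>s z\<bar> * del"
      proof -
        have "- (s z) * d \<le> \<bar>s z\<bar> * d" using d by (intro mult_right_mono) auto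
        also have "\<dots> \<le> \<bar>s z\<bar> * del" using d by (intro mult_left_mono) auto
        finally show ?thesis by (simp add: mult_ac)
      qed
      moreover have "d\<^sup>2 \<le> del * del" using d by (simp add: power2_eq_square mult_mono)
      ultimately show ?thesis by (simp add: algebra_simps)
    qed
    have P3: "lam * (Sd z * w z) \<ge> lam * (s z * w z) - \<bar>lam\<bar> * del * \<bar>w z\<bar>" for z
    proof -
      have "\<bar>lam * ((Sd z - s z) * w z)\<bar> \<le> \<bar>lam\<bar> * del * \<bar>w z\<bar>"
      proof -
        have a: "\<bar>Sd z - s z\<bar> \<le> del" using SA[of z] by simp
        have "\<bar>Sd z - s z\<bar> * \<bar>w z\<bar> \<le> del * \<bar>w z\<bar>" using a by (rule mult_right_mono) simp
        then have "\<bar>lam\<bar> * (\<bar>Sd z - s z\<bar> * \<bar>w z\<bar>) \<le> \<bar>lam\<bar> * (del * \<bar>w z\<bar>)" by (rule mult_left_mono) simp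
        then show ?thesis by (simp add: abs_mult mult_ac)
      qed
      then show ?thesis by (simp add: algebra_simps abs_le_iff)
    qed
    have iSd2: "integrable rho (\<lambda>z. (Sd z)\<^sup>2)"
      by (rule int_sq_bound[where h="\<lambda>z. (s z)\<^sup>2 + del * (2 * \<bar>s z\<bar> + del)"])
        (use is2 ias P2 in auto)
    have iSdw: "integrable rho (\<lambda>z. Sd z * w z)" by (rule int_prod_sq[OF Sdm wm iSd2 iw2])
    have st: "lam * (\<integral>z. Sd z * w z \<partial>rho) - D \<le> lam\<^sup>2 * xi\<^sup>2 / 2 * (\<integral>z. (Sd z)\<^sup>2 \<partial>rho) + e / 2"
      using step[where v=v and lam=lam and eps="e / 2", OF u del0] e unfolding Sd_def s_def w_def by simp
    have A1: "lam * c1 - \<bar>lam\<bar> * del * Eb \<le> lam * (\<integral>z. Sd z * w z \<partial>rho)"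
    proof -
      have "(\<integral>z. lam * (s z * w z) - \<bar>lam\<bar> * del * \<bar>w z\<bar> \<partial>rho) \<le> (\<integral>z. lam * (Sd z * w z) \<partial>rho)"
        using isw iaw iSdw P3 by (intro integral_mono) auto
      then show ?thesis unfolding c1_def Eb_def using isw iaw by simp
    qed
    have A2: "(\<integral>z. (Sd z)\<^sup>2 \<partial>rho) \<le> c2 + del * (2 * Ea + del)"
    proof -
      have "(\<integral>z. (Sd z)\<^sup>2 \<partial>rho) \<le> (\<integral>z. (s z)\<^sup>2 + del * (2 * \<bar>s z\<bar> + del) \<partial>rho)"
        using iSd2 is2 ias P2 by (intro integral_mono) auto
      then show ?thesis unfolding c2_def Ea_def using is2 ias by (simp add: P.prob_space algebra_simps)
    qed
    have l0: "lam\<^sup>2 * xi\<^sup>2 / 2 \<ge> 0" by simp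
    have "lam * c1 - D \<le> lam\<^sup>2 * xi\<^sup>2 / 2 * (c2 + del * (2 * Ea + del)) + e / 2 + \<bar>lam\<bar> * del * Eb"
      using A1 st mult_left_mono[OF A2 l0] by linarith
    also have "\<dots> \<le> lam\<^sup>2 * xi\<^sup>2 / 2 * c2 + del * K + e / 2"
    proof -
      have "del * (2 * Ea + del) \<le> del * (2 * Ea + 1)" using del0 del1 by (intro mult_left_mono) auto
      then have "lam\<^sup>2 * xi\<^sup>2 / 2 * (del * (2 * Ea + del)) \<le> lam\<^sup>2 * xi\<^sup>2 / 2 * (del * (2 * Ea + 1))"
        by (rule mult_left_mono) simp
      then show ?thesis unfolding K_def by (simp add: algebra_simps)
    qed
    finally show ?thesis using delK by simp
  qed
  then have "lam * c1 - D \<le> lam\<^sup>2 * xi\<^sup>2 / 2 * c2" by (rule field_le_epsilon)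
  then show ?thesis unfolding c1_def c2_def s_def w_def .
qed

end

lemma bilin_integral:
  fixes F G :: "'a \<Rightarrow> real^'n" and u v :: "real^'n"
  assumes int: "\<And>i j. integrable M (\<lambda>z. F z $ i * G z $ j)"
  shows "(\<integral>z. (v \<bullet> F z) * (u \<bullet> G z) \<partial>M) = (\<Sum>i\<in>UNIV. \<Sum>j\<in>UNIV. v$i * u$j * (\<integral>z. F z $ i * G z $ j \<partial>M))"
proof -
  have "(\<integral>z. (v \<bullet> F z) * (u \<bullet> G z) \<partial>M) = (\<integral>z. (\<Sum>i\<in>UNIV. \<Sum>j\<in>UNIV. v$i * u$j * (F z $ i * G z $ j)) \<partial>M)"
  proof (rule Bochner_Integration.integral_cong)
    fix z
    have "(v \<bullet> F z) * (u \<bullet> G z) = (\<Sum>i\<in>UNIV. v$i * F z $ i) * (\<Sum>j\<in>UNIV. u$j * G z $ j)"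
      by (simp add: inner_vec_def)
    also have "\<dots> = (\<Sum>i\<in>UNIV. \<Sum>j\<in>UNIV. (v$i * F z $ i) * (u$j * G z $ j))" by (rule sum_product)
    also have "\<dots> = (\<Sum>i\<in>UNIV. \<Sum>j\<in>UNIV. v$i * u$j * (F z $ i * G z $ j))" by (simp add: mult_ac)
    finally show "(v \<bullet> F z) * (u \<bullet> G z) = (\<Sum>i\<in>UNIV. \<Sum>j\<in>UNIV. v$i * u$j * (F z $ i * G z $ j))" .
  qed simp
  also have "\<dots> = (\<Sum>i\<in>UNIV. (\<integral>z. (\<Sum>j\<in>UNIV. v$i * u$j * (F z $ i * G z $ j)) \<partial>M))"
    using int by (intro Bochner_Integration.integral_sum) auto
  also have "\<dots> = (\<Sum>i\<in>UNIV. \<Sum>j\<in>UNIV. (\<integral>z. v$i * u$j * (F z $ i * G z $ j) \<partial>M))"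
    using int by (intro sum.cong refl Bochner_Integration.integral_sum) auto
  also have "\<dots> = (\<Sum>i\<in>UNIV. \<Sum>j\<in>UNIV. v$i * u$j * (\<integral>z. F z $ i * G z $ j \<partial>M))"
    by simp
  finally show ?thesis .
qed

lemma meas_vec_nth[measurable]:
  fixes f :: "'a \<Rightarrow> real^'n"
  assumes [measurable]: "f \<in> borel_measurable M"
  shows "(\<lambda>x. f x $ i) \<in> borel_measurable M"
proof -
  have "(\<lambda>x::real^'n. x $ i) \<in> borel_measurable borel"
    by (intro borel_measurable_continuous_onI continuous_intros)
  then show ?thesis by (rule measurable_compose[OF assms])
qed

lemma matvec_inner:
  fixes C :: "real^'m^'n"
  shows "v \<bullet> (C *v u) = (\<Sum>i\<in>UNIV. \<Sum>j\<in>UNIV. v$i * u$j * C$i$j)"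
  by (simp add: inner_vec_def matrix_vector_mult_def sum_distrib_left mult_ac)

context mt begin

lemma int_dX2: "integrable rho (\<lambda>z. (norm (fst z - mX))\<^sup>2)"
proof (rule int_sq_bound[where h="\<lambda>z. 2 * ((norm (fst z))\<^sup>2 + (norm mX)\<^sup>2)"])
  show "integrable rho (\<lambda>z. 2 * ((norm (fst z))\<^sup>2 + (norm mX)\<^sup>2))" using intX by simp
  fix z
  have "norm (fst z - mX) \<le> norm (fst z) + norm mX" by (rule norm_triangle_ineq4)
  then have "(norm (fst z - mX))\<^sup>2 \<le> (norm (fst z) + norm mX)\<^sup>2" by (intro power_mono) auto
  also have "\<dots> \<le> 2 * ((norm (fst z))\<^sup>2 + (norm mX)\<^sup>2)"
    using sum_squares_bound[of "norm (fst z)" "norm mX"] by (simp add: power2_sum)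
  finally show "(norm (fst z - mX))\<^sup>2 \<le> 2 * ((norm (fst z))\<^sup>2 + (norm mX)\<^sup>2)" .
qed measurable

lemma int_dY2: "integrable rho (\<lambda>z. (norm (snd z - mY))\<^sup>2)"
proof (rule int_sq_bound[where h="\<lambda>z. 2 * ((norm (snd z))\<^sup>2 + (norm mY)\<^sup>2)"])
  show "integrable rho (\<lambda>z. 2 * ((norm (snd z))\<^sup>2 + (norm mY)\<^sup>2))" using intY by simp
  fix z
  have "norm (snd z - mY) \<le> norm (snd z) + norm mY" by (rule norm_triangle_ineq4)
  then have "(norm (snd z - mY))\<^sup>2 \<le> (norm (snd z) + norm mY)\<^sup>2" by (intro power_mono) auto
  also have "\<dots> \<le> 2 * ((norm (snd z))\<^sup>2 + (norm mY)\<^sup>2)"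
    using sum_squares_bound[of "norm (snd z)" "norm mY"] by (simp add: power2_sum)
  finally show "(norm (snd z - mY))\<^sup>2 \<le> 2 * ((norm (snd z))\<^sup>2 + (norm mY)\<^sup>2)" .
qed measurable

lemma int_comp2:
  fixes F :: "_ \<Rightarrow> real^'d"
  assumes [measurable]: "F \<in> borel_measurable rho" and "integrable rho (\<lambda>z. (norm (F z))\<^sup>2)"
  shows "integrable rho (\<lambda>z. (F z $ i)\<^sup>2)"
proof (rule int_sq_bound[where h="\<lambda>z. (norm (F z))\<^sup>2"])
  show "(F z $ i)\<^sup>2 \<le> (norm (F z))\<^sup>2" for z
    using component_le_norm_cart[of "F z" i] by (metis abs_ge_zero power2_abs power_mono)
qed (use assms in auto)

lemma cov_xy: "v \<bullet> (cross_cov rho fst snd *v u) = (\<integral>z. (v \<bullet> (fst z - mX)) * (u \<bullet> (snd z - mY)) \<partial>rho)"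
proof -
  have i1: "integrable rho (\<lambda>z. ((fst z - mX) $ i)\<^sup>2)" for i by (rule int_comp2[OF _ int_dX2]) measurable
  have i2: "integrable rho (\<lambda>z. ((snd z - mY) $ i)\<^sup>2)" for i by (rule int_comp2[OF _ int_dY2]) measurable
  have i: "integrable rho (\<lambda>z. (fst z - mX) $ i * (snd z - mY) $ j)" for i j
    by (rule int_prod_sq[OF _ _ i1 i2]) measurable
  show ?thesis
    unfolding matvec_inner bilin_integral[OF i] unfolding cross_cov_def mX_def mY_def by simp
qed

lemma cov_xx: "v \<bullet> (cross_cov rho fst fst *v v) = (\<integral>z. (v \<bullet> (fst z - mX))\<^sup>2 \<partial>rho)"
proof -
  have i1: "integrable rho (\<lambda>z. ((fst z - mX) $ i)\<^sup>2)" for i by (rule int_comp2[OF _ int_dX2]) measurable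
  have i: "integrable rho (\<lambda>z. (fst z - mX) $ i * (fst z - mX) $ j)" for i j
    by (rule int_prod_sq[OF _ _ i1 i1]) measurable
  have "v \<bullet> (cross_cov rho fst fst *v v) = (\<integral>z. (v \<bullet> (fst z - mX)) * (v \<bullet> (fst z - mX)) \<partial>rho)"
    unfolding matvec_inner bilin_integral[OF i] unfolding cross_cov_def mX_def by simp
  then show ?thesis by (simp add: power2_eq_square)
qed

end

theorem mainTheorem10:
  fixes Phi :: "real \<Rightarrow> real"
    and rho :: "((real^'d) \<times> (real^'d)) measure"
    and xi :: real
  assumes Phi: "admissible_Phi Phi"
    and prob: "prob_space rho"
    and sets_rho: "sets rho = sets borel"
    and intX: "integrable rho (\<lambda>z. (norm (fst z))\<^sup>2)"
    and intY: "integrable rho (\<lambda>z. (norm (snd z))\<^sup>2)"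
    and xi_pos: "0 < xi"
    and hyp: "\<forall>\<theta>::real^'d.
       (INF a\<in>(UNIV::real set).
          ext_integral (distr rho borel snd)
            (\<lambda>y. Phi_ext_conj Phi (\<theta> \<bullet> (y - (\<integral>z. snd z \<partial>rho)) - a)) + ereal a)
       \<le> ereal ((norm \<theta>)\<^sup>2 * xi\<^sup>2 / 2)"
  shows "Phi_MI Phi rho \<noteq> \<infinity> \<longrightarrow>
    onorm (\<lambda>v. cross_cov rho fst snd *v v)
      \<le> xi * sqrt (2 * onorm (\<lambda>v. cross_cov rho fst fst *v v) * real_of_ereal (Phi_MI Phi rho))"
proof
  assume MI: "Phi_MI Phi rho \<noteq> \<infinity>"
  interpret M: mt Phi rho xi
    by (rule mt.intro[OF Phi prob sets_rho intX intY xi_pos hyp MI])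
  define C where "C = cross_cov rho fst snd"
  define S where "S = cross_cov rho fst fst"
  define b where "b = xi * sqrt (2 * onorm (\<lambda>v. S *v v) * M.D)"
  have oS: "onorm (\<lambda>v. S *v v) \<ge> 0" by (rule onorm_pos_le) simp
  have unit: "norm (C *v u) \<le> b" if u: "norm u = 1" for u
  proof -
    define v where "v = C *v u"
    define c1 where "c1 = (\<integral>z. (v \<bullet> (fst z - M.mX)) * (u \<bullet> (snd z - M.mY)) \<partial>rho)"
    define c2 where "c2 = (\<integral>z. (v \<bullet> (fst z - M.mX))\<^sup>2 \<partial>rho)"
    have c2: "c2 \<ge> 0" unfolding c2_def by (simp add: Bochner_Integration.integral_nonneg)
    have Q: "c1\<^sup>2 \<le> 2 * xi\<^sup>2 * M.D * c2" "M.D \<ge> 0"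
      using quad_bound[OF xi_pos c2, of c1 M.D] M.lam_bound[where v=v, OF u] unfolding c1_def c2_def by auto
    have e1: "c1 = (norm v)\<^sup>2" unfolding c1_def using M.cov_xy[of v u] unfolding v_def C_def
      by (simp add: power2_norm_eq_inner)
    have e2: "c2 = v \<bullet> (S *v v)" unfolding c2_def S_def using M.cov_xx[of v] by simp
    have "c2 \<le> norm v * norm (S *v v)" unfolding e2 by (rule norm_cauchy_schwarz)
    also have "\<dots> \<le> norm v * (onorm (\<lambda>v. S *v v) * norm v)"
      by (rule mult_left_mono[OF onorm]) simp_all
    finally have c2b: "c2 \<le> onorm (\<lambda>v. S *v v) * (norm v)\<^sup>2" by (simp add: power2_eq_square mult_ac)
    have B0: "0 \<le> 2 * xi\<^sup>2 * M.D" using Q(2) by simp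
    define B where "B = 2 * xi\<^sup>2 * M.D"
    define Onm where "Onm = onorm (\<lambda>v. S *v v)"
    define n where "n = (norm v)\<^sup>2"
    have B0': "0 \<le> B" unfolding B_def using B0 .
    have "n * n \<le> B * c2" using Q(1) unfolding e1 n_def B_def by (simp add: power2_eq_square)
    also have "\<dots> \<le> B * (Onm * n)" using mult_left_mono[OF c2b B0'] unfolding Onm_def n_def .
    also have "\<dots> = (B * Onm) * n" by (simp only: mult.assoc)
    finally have nn: "n * n \<le> (B * Onm) * n" .
    have sq': "n \<le> B * Onm"
    proof (cases "n = 0")
      case True then show ?thesis using B0' oS unfolding Onm_def by simp
    next
      case False
      then have "n > 0" unfolding n_def by simp
      then show ?thesis using nn by (simp add: mult_le_cancel_right_pos)
    qed
    then have sq: "(norm v)\<^sup>2 \<le> 2 * xi\<^sup>2 * M.D * onorm (\<lambda>v. S *v v)"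
      unfolding n_def B_def Onm_def .
    have "norm v = sqrt ((norm v)\<^sup>2)" by simp
    also have "\<dots> \<le> sqrt (2 * xi\<^sup>2 * M.D * onorm (\<lambda>v. S *v v))" using sq by (rule real_sqrt_le_mono)
    also have "\<dots> = b" unfolding b_def using xi_pos
      by (simp add: real_sqrt_mult mult_ac)
    finally show ?thesis unfolding v_def .
  qed
  have "onorm (\<lambda>v. C *v v) \<le> b"
  proof (rule onorm_le)
    fix x :: "real^'d"
    show "norm (C *v x) \<le> b * norm x"
    proof (cases "x = 0")
      case True then show ?thesis by simp
    next
      case False
      define u where "u = (1 / norm x) *\<^sub>R x"
      have u: "norm u = 1" unfolding u_def using False by simp
      have "x = norm x *\<^sub>R u" unfolding u_def using False by simp
      then have "C *v x = C *v (norm x *\<^sub>R u)" by simp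
      also have "\<dots> = norm x *\<^sub>R (C *v u)" by (rule matrix_vector_mult_scaleR)
      finally have "C *v x = norm x *\<^sub>R (C *v u)" .
      then have "norm (C *v x) = norm x * norm (C *v u)" by simp
      also have "\<dots> \<le> norm x * b" using unit[OF u] by (intro mult_left_mono) auto
      finally show ?thesis by (simp add: mult_ac)
    qed
  qed
  then show "onorm (\<lambda>v. cross_cov rho fst snd *v v)
      \<le> xi * sqrt (2 * onorm (\<lambda>v. cross_cov rho fst fst *v v) * real_of_ereal (Phi_MI Phi rho))"
    unfolding b_def C_def S_def M.D_def .
qed


end
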